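(* A norm on $\mathbb{R}^2$ is uniformly robust if and only if it is polyhedral.
   Context: A norm is a symmetric gauge (Minkowski functional of a symmetric convex compact set $B_\gamma$ with $0$ in its interior), with skewness $\sigma=1$; it is polyhedral if $B_\gamma$ is a polytope. For weighted sets, $(D,w)+(C,v)$ is $D\cup C$ with weights added at common points; a Fermat–Weber point of a finite positively weighted set is a minimizer of $x\mapsto\sum_s u_s\gamma(x-s)$. $\gamma$ is uniformly robust if for every finite $D$ with positive weights $w$ (total $w_D$) there is a bounded $K$ such that for every finite $C$ with positive weights $v$ with $\sigma v_C<w_D$, all Fermat–Weber points of $(D,w)+(C,v)$ lie in $K$. *)

theory Defs
  imports "HOL-Analysis.Analysis"
begin

definition gauge_of :: "('a::real_normed_vector) set \<Rightarrow> 'a \<Rightarrow> real" where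
  "gauge_of B x = Inf {t. t > 0 \<and> x \<in> (\<lambda>y. t *\<^sub>R y) ` B}"

definition norm_ball :: "('a::real_normed_vector) set \<Rightarrow> bool" where
  "norm_ball B \<longleftrightarrow> convex B \<and> compact B \<and> 0 \<in> interior B \<and> (\<forall>x\<in>B. - x \<in> B)"

definition wsum_weight :: "'a set \<Rightarrow> ('a \<Rightarrow> real) \<Rightarrow> 'a set \<Rightarrow> ('a \<Rightarrow> real) \<Rightarrow> 'a \<Rightarrow> real" where
  "wsum_weight D w C v s = (if s \<in> D then w s else 0) + (if s \<in> C then v s else 0)"

definition fermat_weber_points ::
  "('a::real_vector \<Rightarrow> real) \<Rightarrow> 'a set \<Rightarrow> ('a \<Rightarrow> real) \<Rightarrow> 'a set" where
  "fermat_weber_points \<gamma> S u =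
     {x. \<forall>y. (\<Sum>s\<in>S. u s * \<gamma> (x - s)) \<le> (\<Sum>s\<in>S. u s * \<gamma> (y - s))}"

text \<open>Uniform robustness (skewness sigma = 1 for norms).\<close>
definition uniformly_robust :: "(real^2 \<Rightarrow> real) \<Rightarrow> bool" where
  "uniformly_robust \<gamma> \<longleftrightarrow>
     (\<forall>D w. finite D \<and> (\<forall>s\<in>D. w s > 0) \<longrightarrow>
        (\<exists>K. bounded K \<and>
           (\<forall>C v. finite C \<and> (\<forall>s\<in>C. v s > 0) \<and> 1 * sum v C < sum w D \<longrightarrow>
              fermat_weber_points \<gamma> (D \<union> C) (wsum_weight D w C v) \<subseteq> K)))"

end

theory Submission
  imports Defs
begin

lemma le_same_pos_bounds:
  fixes a b :: real
  assumes "a \<ge> 0" "b \<ge> 0" "\<And>t. t > 0 \<Longrightarrow> a \<le> t \<longleftrightarrow> b \<le> t"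
  shows "a = b"
proof (rule ccontr)
  assume ne: "a \<noteq> b"
  define m where "m = (a+b)/2"
  have m: "m > 0" using assms ne by (simp add: m_def)
  show False
  proof (cases "a < b")
    case True
    have "a \<le> m" "\<not> b \<le> m" using True by (simp_all add: m_def field_simps)
    with assms(3)[OF m] show False by simp
  next
    case False
    then have "b < a" using ne by simp
    then have "b \<le> m" "\<not> a \<le> m" by (simp_all add: m_def field_simps)
    with assms(3)[OF m] show False by simp
  qed
qed

context
  fixes B :: "(real^2) set"
  assumes nb: "norm_ball B"
begin

lemma nb_convex: "convex B" and nb_compact: "compact B" and nb_0: "0 \<in> interior B"
  and nb_sym: "x \<in> B \<Longrightarrow> -x \<in> B"
  using nb by (auto simp: norm_ball_def)

lemma nb_closed: "closed B" using nb_compact compact_imp_closed by blast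
lemma nb_bounded: "bounded B" using nb_compact compact_imp_bounded by blast
lemma nb_0in: "0 \<in> B" using nb_0 interior_subset by blast

lemma nb_ball: obtains \<rho> where "\<rho> > 0" "cball 0 \<rho> \<subseteq> B"
  using nb_0 by (meson mem_interior_cball)

lemma nb_bound: "\<exists>R>0. \<forall>x\<in>B. norm x \<le> R"
  using nb_bounded by (meson bounded_pos)

lemma scaleB_iff: "t > 0 \<Longrightarrow> y \<in> (\<lambda>z. t *\<^sub>R z) ` B \<longleftrightarrow> (1/t) *\<^sub>R y \<in> B"
  by (auto simp: image_iff) (metis divideR_right divide_inverse_commute mult_cancel_left1 nonzero_mult_div_cancel_left not_less_iff_gr_or_eq scaleR_one scaleR_scaleR)

lemma star: "z \<in> B \<Longrightarrow> 0 \<le> c \<Longrightarrow> c \<le> 1 \<Longrightarrow> c *\<^sub>R z \<in> B"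
  using nb_convex nb_0in convexD[of B 0 z "1-c" c] by auto

definition "TT y = {t. t > 0 \<and> y \<in> (\<lambda>z. t *\<^sub>R z) ` B}"

lemma TT_nonempty: "\<exists>t. t \<in> TT y"
proof -
  obtain \<rho> where r: "\<rho> > 0" "cball 0 \<rho> \<subseteq> B" by (rule nb_ball)
  define t where "t = norm y / \<rho> + 1"
  have "norm y / \<rho> \<ge> 0" using r by simp
  then have t: "t > 0" by (simp add: t_def)
  have "norm ((1/t) *\<^sub>R y) = norm y / t" using t by simp
  also have "\<dots> \<le> \<rho>" using t r by (simp add: t_def divide_le_eq field_simps)
  finally have "(1/t) *\<^sub>R y \<in> B" using r by auto
  thus ?thesis using t scaleB_iff by (auto simp: TT_def)
qed

lemma TT_up: "t \<in> TT y \<Longrightarrow> t \<le> t' \<Longrightarrow> t' \<in> TT y"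
proof -
  assume a: "t \<in> TT y" "t \<le> t'"
  then have t: "t > 0" "(1/t) *\<^sub>R y \<in> B" using scaleB_iff by (auto simp: TT_def)
  have "(t/t') *\<^sub>R ((1/t) *\<^sub>R y) \<in> B" by (rule star[OF t(2)]) (use t a in \<open>auto simp: divide_le_eq\<close>)
  moreover have "(t/t') *\<^sub>R ((1/t) *\<^sub>R y) = (1/t') *\<^sub>R y" using t by auto
  ultimately show ?thesis using t a scaleB_iff[of t'] by (auto simp: TT_def)
qed

lemma gauge_nonneg: "gauge_of B y \<ge> 0"
  unfolding gauge_of_def using TT_nonempty[of y]
  by (intro cInf_greatest) (auto simp: TT_def)

lemma gauge_le_iff: assumes "t > 0" shows "gauge_of B y \<le> t \<longleftrightarrow> (1/t) *\<^sub>R y \<in> B"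
proof
  assume "(1/t) *\<^sub>R y \<in> B"
  then have "t \<in> TT y" using assms scaleB_iff by (auto simp: TT_def)
  then show "gauge_of B y \<le> t" unfolding gauge_of_def TT_def
    by (intro cInf_lower) (auto intro: bdd_belowI[of _ 0])
next
  assume g: "gauge_of B y \<le> t"
  have all: "(1/s) *\<^sub>R y \<in> B" if s: "s > t" for s
  proof -
    have "Inf (TT y) < s" using g s by (simp add: gauge_of_def TT_def)
    then obtain t' where "t' \<in> TT y" "t' < s"
      using cInf_lessD[of "TT y" s] TT_nonempty[of y] by blast
    then have "s \<in> TT y" using TT_up by auto
    then show ?thesis using scaleB_iff by (auto simp: TT_def)
  qed
  have lim: "((\<lambda>s. (1/s) *\<^sub>R y) \<longlongrightarrow> (1/t) *\<^sub>R y) (at_right t)"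
    using assms by (intro tendsto_intros) auto
  show "(1/t) *\<^sub>R y \<in> B"
    apply (rule Lim_in_closed_set[OF nb_closed _ _ lim])
    using all by (auto simp: eventually_at_right_field intro: exI[of _ "t+1"])
qed


abbreviation "gg \<equiv> gauge_of B"

lemma gauge_B: "gg y \<le> 1 \<longleftrightarrow> y \<in> B"
  using gauge_le_iff[of 1 y] by simp

lemma gauge_le_iffB: "t > 0 \<Longrightarrow> gg y \<le> t \<longleftrightarrow> (1/t) *\<^sub>R y \<in> B"
  by (rule gauge_le_iff)

lemma gauge_0: "gg 0 = 0"
  by (rule le_same_pos_bounds) (use gauge_nonneg gauge_le_iff nb_0in in auto)

lemma gauge_scale: assumes "c \<ge> 0" shows "gg (c *\<^sub>R y) = c * gg y"
proof (cases "c = 0")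
  case True then show ?thesis by (simp add: gauge_0)
next
  case False
  then have c: "c > 0" using assms by simp
  show ?thesis
  proof (rule le_same_pos_bounds)
    show "gg (c *\<^sub>R y) \<ge> 0" "c * gg y \<ge> 0" using gauge_nonneg c by auto
    fix t :: real assume t: "t > 0"
    have "gg (c *\<^sub>R y) \<le> t \<longleftrightarrow> (1/t) *\<^sub>R (c *\<^sub>R y) \<in> B" using gauge_le_iff t by blast
    also have "(1/t) *\<^sub>R (c *\<^sub>R y) = (1/(t/c)) *\<^sub>R y" using c by simp
    also have "(\<dots> \<in> B) \<longleftrightarrow> gg y \<le> t/c" using gauge_le_iff[of "t/c" y] c t by simp
    also have "\<dots> \<longleftrightarrow> c * gg y \<le> t" using c by (simp add: field_simps)
    finally show "gg (c *\<^sub>R y) \<le> t \<longleftrightarrow> c * gg y \<le> t" .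
  qed
qed

lemma gauge_neg: "gg (- y) = gg y"
proof (rule le_same_pos_bounds)
  show "gg (- y) \<ge> 0" "gg y \<ge> 0" using gauge_nonneg by auto
  fix t :: real assume t: "t > 0"
  have "(1/t) *\<^sub>R (-y) = - ((1/t) *\<^sub>R y)" by simp
  then show "gg (- y) \<le> t \<longleftrightarrow> gg y \<le> t" using gauge_le_iff[OF t] nb_sym
    by (metis minus_minus)
qed

lemma gauge_triangle: "gg (y + z) \<le> gg y + gg z"
proof (rule field_le_epsilon)
  fix e :: real assume e: "e > 0"
  define s where "s = gg y + e/2"
  define t where "t = gg z + e/2"
  have s: "s > 0" and t: "t > 0" using gauge_nonneg[of y] gauge_nonneg[of z] e by (auto simp: s_def t_def)
  have ys: "(1/s) *\<^sub>R y \<in> B" using gauge_le_iff[OF s, of y] e by (simp add: s_def)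
  have zt: "(1/t) *\<^sub>R z \<in> B" using gauge_le_iff[OF t, of z] e by (simp add: t_def)
  have "(s/(s+t)) *\<^sub>R ((1/s) *\<^sub>R y) + (t/(s+t)) *\<^sub>R ((1/t) *\<^sub>R z) \<in> B"
    using convexD[OF nb_convex ys zt, of "s/(s+t)" "t/(s+t)"] s t by (simp add: add_divide_distrib[symmetric])
  moreover have "(s/(s+t)) *\<^sub>R ((1/s) *\<^sub>R y) + (t/(s+t)) *\<^sub>R ((1/t) *\<^sub>R z) = (1/(s+t)) *\<^sub>R (y+z)"
    using s t by (simp add: scaleR_add_right)
  ultimately have "gg (y+z) \<le> s + t" using gauge_le_iff[of "s+t" "y+z"] s t by simp
  then show "gg (y+z) \<le> gg y + gg z + e" by (simp add: s_def t_def)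
qed

lemma gauge_diff: "gg y - gg z \<le> gg (y - z)"
  using gauge_triangle[of "y - z" z] by simp

lemma gauge_upper: "\<exists>M>0. \<forall>y. gg y \<le> M * norm y"
proof -
  obtain \<rho> where r: "\<rho> > 0" "cball 0 \<rho> \<subseteq> B" by (rule nb_ball)
  have "gg y \<le> (1/\<rho>) * norm y" for y
  proof (cases "y = 0")
    case True then show ?thesis by (simp add: gauge_0)
  next
    case False
    then have t: "norm y / \<rho> > 0" using r by simp
    have "norm ((1/(norm y / \<rho>)) *\<^sub>R y) = \<rho>" using False r by simp
    then have "(1/(norm y / \<rho>)) *\<^sub>R y \<in> B" using r by auto
    then show ?thesis using gauge_le_iff[OF t] by simp
  qed
  then show ?thesis using r by (intro exI[of _ "1/\<rho>"]) simp
qed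

lemma gauge_lower: "\<exists>R>0. \<forall>y. norm y \<le> R * gg y"
proof -
  obtain R where R: "R > 0" "\<And>x. x \<in> B \<Longrightarrow> norm x \<le> R" using nb_bound by blast
  have "norm y \<le> R * gg y" for y
  proof (rule field_le_epsilon)
    fix e :: real assume e: "e > 0"
    define t where "t = gg y + e / R"
    have t: "t > 0" using gauge_nonneg[of y] e R by (simp add: t_def add_nonneg_pos)
    have "(1/t) *\<^sub>R y \<in> B" using gauge_le_iff[OF t, of y] e R by (simp add: t_def)
    then have "norm ((1/t) *\<^sub>R y) \<le> R" using R by blast
    then have "norm y / t \<le> R" using t by simp
    then have "norm y \<le> R * t" using t by (simp add: divide_le_eq mult.commute)
    also have "\<dots> = R * gg y + e" using R by (simp add: t_def algebra_simps)
    finally show "norm y \<le> R * gg y + e" .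
  qed
  then show ?thesis using R by blast
qed

lemma gauge_pos: "y \<noteq> 0 \<Longrightarrow> gg y > 0"
proof -
  assume y: "y \<noteq> 0"
  obtain R where "R > 0" "\<And>y. norm y \<le> R * gg y" using gauge_lower by blast
  then have "0 < R * gg y" using y by (meson zero_less_norm_iff order_less_le_trans)
  then show ?thesis using \<open>R > 0\<close> by (simp add: zero_less_mult_iff)
qed

lemma gauge_lipschitz: "\<exists>M>0. \<forall>y z. \<bar>gg y - gg z\<bar> \<le> M * norm (y - z)"
proof -
  obtain M where M: "M > 0" "\<And>y. gg y \<le> M * norm y" using gauge_upper by blast
  have "\<bar>gg y - gg z\<bar> \<le> M * norm (y - z)" for y z
  proof -
    have "gg y - gg z \<le> M * norm (y - z)" using gauge_diff[of y z] M(2)[of "y-z"] by simp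
    moreover have "gg z - gg y \<le> M * norm (y - z)" using gauge_diff[of z y] M(2)[of "z-y"] by (simp add: norm_minus_commute)
    ultimately show ?thesis by simp
  qed
  then show ?thesis using M by blast
qed

lemma gauge_cont: "continuous_on S gg"
proof -
  obtain M where M: "M > 0" "\<And>y z. \<bar>gg y - gg z\<bar> \<le> M * norm (y - z)" using gauge_lipschitz by blast
  have "M-lipschitz_on S gg" using M by (intro lipschitz_onI) (auto simp: dist_norm dist_real_def)
  then show ?thesis by (rule lipschitz_on_continuous_on)
qed

lemma gauge_sphere_compact: "compact {y. gg y = 1}"
proof -
  obtain R where R: "R > 0" "\<And>y. norm y \<le> R * gg y" using gauge_lower by blast
  have "closed {y. gg y = 1}" using gauge_cont by (intro closed_Collect_eq continuous_intros) auto
  moreover have "bounded {y. gg y = 1}" using R unfolding bounded_iff by (metis mem_Collect_eq mult.right_neutral)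
  ultimately show ?thesis by (simp add: compact_eq_bounded_closed)
qed

end

lemma finite_pos_lower:
  fixes f :: "'a \<Rightarrow> real"
  assumes "finite S" "\<And>z. z \<in> S \<Longrightarrow> f z > 0"
  shows "\<exists>\<delta>>0. \<forall>z\<in>S. \<delta> \<le> f z"
  using assms
proof (induction S rule: finite_induct)
  case empty then show ?case by (auto intro: exI[of _ 1])
next
  case (insert a S)
  then obtain d where d: "d > 0" "\<forall>z\<in>S. d \<le> f z" by auto
  have "f a > 0" using insert by auto
  then show ?case using d by (intro exI[of _ "min d (f a)"]) auto
qed

lemma sum_if_restrict:
  fixes w :: "'a \<Rightarrow> real"
  assumes "finite U" "D \<subseteq> U"
  shows "(\<Sum>s\<in>U. if s \<in> D then w s else 0) = sum w D"
proof -
  have "U \<inter> D = D" using assms(2) by blast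
  then show ?thesis using sum.inter_restrict[OF assms(1), of w D] by simp
qed

lemma lincomb:
  fixes wd vc gn go k :: real
  assumes "wd * gn \<le> wd * (go - k)" "vc * gn \<le> vc * (go + k)"
  shows "(wd + vc) * gn \<le> (wd + vc) * go - k * (wd - vc)"
  using assms by (simp add: algebra_simps)

lemma robust_max:
  fixes \<gamma> :: "real^2 \<Rightarrow> real" and L :: "(real^2) set"
  assumes L: "finite L" "L \<noteq> {}"
    and gmax: "\<And>y. \<gamma> y = Max ((\<lambda>a. a \<bullet> y) ` L)"
    and pos: "\<And>e. e \<noteq> 0 \<Longrightarrow> \<gamma> e > 0"
    and sym: "\<And>e. \<gamma> (- e) = \<gamma> e"
    and hom: "\<And>c y. c \<ge> 0 \<Longrightarrow> \<gamma> (c *\<^sub>R y) = c * \<gamma> y"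
    and tri: "\<And>y z. \<gamma> (y + z) \<le> \<gamma> y + \<gamma> z"
    and cont: "continuous_on UNIV \<gamma>"
  shows "uniformly_robust \<gamma>"
proof -
  have ge: "a \<bullet> y \<le> \<gamma> y" if "a \<in> L" for a y
    using that L by (simp add: gmax)
  have g0: "\<gamma> 0 = 0" using hom[of 0 0] by simp
  have gnn: "\<gamma> y \<ge> 0" for y using pos[of y] g0 by (cases "y = 0") auto
  have contI: "continuous_on S \<gamma>" for S using cont continuous_on_subset by blast
  define Pgood where "Pgood I \<longleftrightarrow> (\<exists>e. e \<noteq> 0 \<and> (\<forall>a\<in>I. a \<bullet> e = \<gamma> e))" for I
  define phi where "phi I z = (\<Sum>a\<in>I. \<gamma> z - a \<bullet> z)" for I z
  have mex: "\<exists>m>0. \<forall>z. phi I z \<ge> m * norm z" if I: "I \<subseteq> L" "\<not> Pgood I" for I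
  proof -
    have fI: "finite I" using I L finite_subset by blast
    have cphi: "continuous_on (sphere 0 1) (phi I)"
      unfolding phi_def by (intro continuous_intros contI)
    obtain z0 where z0: "z0 \<in> sphere (0::real^2) 1" "\<forall>z\<in>sphere 0 1. phi I z0 \<le> phi I z"
    proof -
      have "sphere (0::real^2) 1 \<noteq> {}" by (simp add: sphere_eq_empty)
      then show ?thesis using continuous_attains_inf[OF compact_sphere _ cphi] that by blast
    qed
    have "z0 \<noteq> 0" using z0 by auto
    then obtain a where a: "a \<in> I" "a \<bullet> z0 \<noteq> \<gamma> z0" using I(2) unfolding Pgood_def by blast
    have "phi I z0 > 0" unfolding phi_def
    proof (rule sum_pos2[OF fI a(1)])
      show "0 < \<gamma> z0 - a \<bullet> z0" using a ge[of a z0] I by force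
      show "\<And>i. i \<in> I \<Longrightarrow> 0 \<le> \<gamma> z0 - i \<bullet> z0" using ge I by force
    qed
    moreover have "phi I z \<ge> phi I z0 * norm z" for z
    proof (cases "z = 0")
      case True then show ?thesis by (simp add: phi_def g0)
    next
      case False
      have zz: "z = norm z *\<^sub>R ((1/norm z) *\<^sub>R z)" using False by simp
      have "phi I z = norm z * phi I ((1/norm z) *\<^sub>R z)"
        unfolding phi_def sum_distrib_left
        apply (rule sum.cong[OF refl])
        apply (subst (1 2) zz)
        apply (subst hom) apply simp
        apply (simp add: algebra_simps)
        done
      moreover have "phi I ((1/norm z) *\<^sub>R z) \<ge> phi I z0" using z0 False by simp
      ultimately show ?thesis by (simp add: mult.commute mult_left_mono)
    qed
    ultimately show ?thesis by blast
  qed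
  define mm where "mm I = (SOME m. m > 0 \<and> (\<forall>z. phi I z \<ge> m * norm z))" for I
  have mm: "mm I > 0" "\<And>z. phi I z \<ge> mm I * norm z" if "I \<subseteq> L" "\<not> Pgood I" for I
    using someI_ex[OF mex[OF that]] unfolding mm_def by auto
  show ?thesis unfolding uniformly_robust_def
  proof (intro allI impI)
    fix D :: "(real^2) set" and w :: "real^2 \<Rightarrow> real"
    assume Dw: "finite D \<and> (\<forall>s\<in>D. w s > 0)"
    define cD where "cD = 2 * (\<Sum>s\<in>D. \<gamma> s)"
    have cD0: "cD \<ge> 0" unfolding cD_def using gnn by (simp add: sum_nonneg)
    define R where "R = (\<Sum>I\<in>Pow L. if Pgood I then 0 else real (card L) * cD / mm I)"
    have Rge: "real (card L) * cD / mm I \<le> R" if "I \<subseteq> L" "\<not> Pgood I" for I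
    proof -
      have "real (card L) * cD / mm I = (if Pgood I then 0 else real (card L) * cD / mm I)" using that by simp
      also have "\<dots> \<le> R" unfolding R_def
        apply (rule member_le_sum)
        subgoal using that by auto
        subgoal for J using mm(1)[of J] cD0 by (auto intro!: divide_nonneg_pos)
        subgoal using L by simp
        done
      finally show ?thesis .
    qed
    show "\<exists>K. bounded K \<and> (\<forall>C v. finite C \<and> (\<forall>s\<in>C. 0 < v s) \<and> 1 * sum v C < sum w D \<longrightarrow>
              fermat_weber_points \<gamma> (D \<union> C) (wsum_weight D w C v) \<subseteq> K)"
    proof (intro exI conjI allI impI subsetI)
      show "bounded (cball (0::real^2) R)" by simp
      fix C :: "(real^2) set" and v x
      assume Cv: "finite C \<and> (\<forall>s\<in>C. 0 < v s) \<and> 1 * sum v C < sum w D"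
      assume xfw: "x \<in> fermat_weber_points \<gamma> (D \<union> C) (wsum_weight D w C v)"
      show "x \<in> cball 0 R"
      proof (rule ccontr)
        assume "x \<notin> cball 0 R"
        then have xR: "norm x > R" by (simp add: dist_norm)
        define I where "I = {a\<in>L. \<exists>s\<in>D. a \<bullet> (x - s) = \<gamma> (x - s)}"
        have IL: "I \<subseteq> L" unfolding I_def by auto
        have good: "Pgood I"
        proof (rule ccontr)
          assume ng: "\<not> Pgood I"
          have trm: "\<gamma> x - a \<bullet> x \<le> cD" if a: "a \<in> I" for a
          proof -
            obtain s where s: "s \<in> D" "a \<bullet> (x - s) = \<gamma> (x - s)" "a \<in> L" using a unfolding I_def by auto
            have "\<gamma> x \<le> \<gamma> (x - s) + \<gamma> s" using tri[of "x - s" s] by simp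
            moreover have "a \<bullet> (- s) \<le> \<gamma> s" using ge[OF s(3), of "-s"] sym by simp
            moreover have "a \<bullet> x = a \<bullet> (x - s) + a \<bullet> s" by (simp add: inner_diff_right)
            moreover have "2 * \<gamma> s \<le> cD" unfolding cD_def
              using member_le_sum[of s D \<gamma>] s(1) Dw gnn by auto
            ultimately show ?thesis using s(2) by (simp add: inner_minus_right)
          qed
          have "phi I x \<le> real (card I) * cD" unfolding phi_def
            using sum_bounded_above[of I "\<lambda>a. \<gamma> x - a \<bullet> x" cD] trm by auto
          also have "\<dots> \<le> real (card L) * cD"
            using card_mono[OF L(1) IL] cD0 by (simp add: mult_right_mono)
          finally have "mm I * norm x \<le> real (card L) * cD" using mm(2)[OF IL ng, of x] by linarith
          then have "norm x \<le> real (card L) * cD / mm I" using mm(1)[OF IL ng]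
            by (simp add: field_simps)
          with Rge[OF IL ng] xR show False by linarith
        qed
        then obtain e where e: "e \<noteq> 0" "\<forall>a\<in>I. a \<bullet> e = \<gamma> e" unfolding Pgood_def by blast
        have ge0: "\<gamma> e > 0" using pos e by blast
        define P where "P = {(s,a). s \<in> D \<and> a \<in> L \<and> a \<bullet> (x - s) < \<gamma> (x - s)}"
        have fP: "finite P" unfolding P_def
          by (rule finite_subset[of _ "D \<times> L"]) (use Dw L in auto)
        obtain \<delta> where d: "\<delta> > 0" "\<forall>z\<in>P. \<delta> \<le> (\<lambda>(s,a). \<gamma> (x - s) - a \<bullet> (x - s)) z"
          using finite_pos_lower[OF fP, of "\<lambda>(s,a). \<gamma> (x - s) - a \<bullet> (x - s)"]
          unfolding P_def by auto
        define t where "t = \<delta> / (2 * \<gamma> e)"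
        have t: "t > 0" using d ge0 by (simp add: t_def)
        have te: "2 * t * \<gamma> e = \<delta>" using ge0 by (simp add: t_def)
        have bndD: "\<gamma> (x - t *\<^sub>R e - s) \<le> \<gamma> (x - s) - t * \<gamma> e" if s: "s \<in> D" for s
        proof -
          have "a \<bullet> (x - t *\<^sub>R e - s) \<le> \<gamma> (x - s) - t * \<gamma> e" if a: "a \<in> L" for a
          proof (cases "a \<bullet> (x - s) = \<gamma> (x - s)")
            case True
            then have "a \<in> I" using a s unfolding I_def by auto
            then have "a \<bullet> e = \<gamma> e" using e by blast
            then show ?thesis using True by (simp add: inner_diff_right algebra_simps)
          next
            case False
            then have "(s,a) \<in> P" using ge[OF a, of "x - s"] a s unfolding P_def by auto
            then have "\<delta> \<le> \<gamma> (x - s) - a \<bullet> (x - s)" using d by auto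
            moreover have "a \<bullet> (- e) \<le> \<gamma> e" using ge[OF a, of "-e"] sym by simp
            moreover have "- (t * (a \<bullet> e)) \<le> t * \<gamma> e"
              using mult_left_mono[OF \<open>a \<bullet> (- e) \<le> \<gamma> e\<close>, of t] t by (simp add: inner_minus_right)
            moreover have "a \<bullet> (x - t *\<^sub>R e - s) = a \<bullet> (x - s) - t * (a \<bullet> e)"
              by (simp add: inner_diff_right)
            ultimately show ?thesis using te by linarith
          qed
          then show ?thesis unfolding gmax[of "x - t *\<^sub>R e - s"] using L by (simp add: Max_le_iff)
        qed
        have bndA: "\<gamma> (x - t *\<^sub>R e - s) \<le> \<gamma> (x - s) + t * \<gamma> e" for s
        proof -
          have "\<gamma> (x - t *\<^sub>R e - s) \<le> \<gamma> (x - s) + \<gamma> (- (t *\<^sub>R e))"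
            using tri[of "x - s" "- (t *\<^sub>R e)"] by (simp add: algebra_simps)
          then show ?thesis using sym hom[of t e] t by simp
        qed
        define u where "u = wsum_weight D w C v"
        define U where "U = D \<union> C"
        have fU: "finite U" using Dw Cv by (simp add: U_def)
        have termb: "u s * \<gamma> (x - t *\<^sub>R e - s) \<le> u s * \<gamma> (x - s)
               - t * \<gamma> e * ((if s \<in> D then w s else 0) - (if s \<in> C then v s else 0))" for s
        proof -
          have A: "(if s \<in> D then w s else 0) * \<gamma> (x - t *\<^sub>R e - s) \<le> (if s \<in> D then w s else 0) * (\<gamma> (x - s) - t * \<gamma> e)"
            using bndD Dw by (auto intro: mult_left_mono less_imp_le)
          have B: "(if s \<in> C then v s else 0) * \<gamma> (x - t *\<^sub>R e - s) \<le> (if s \<in> C then v s else 0) * (\<gamma> (x - s) + t * \<gamma> e)"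
            using bndA Cv by (auto intro: mult_left_mono less_imp_le)
          have uu: "u s = (if s \<in> D then w s else 0) + (if s \<in> C then v s else 0)"
            unfolding u_def wsum_weight_def by simp
          show ?thesis unfolding uu by (rule lincomb[OF A B])
        qed
        have "(\<Sum>s\<in>U. u s * \<gamma> (x - t *\<^sub>R e - s)) \<le> (\<Sum>s\<in>U. u s * \<gamma> (x - s)
               - t * \<gamma> e * ((if s \<in> D then w s else 0) - (if s \<in> C then v s else 0)))"
          by (rule sum_mono) (rule termb)
        also have "\<dots> = (\<Sum>s\<in>U. u s * \<gamma> (x - s)) - t * \<gamma> e * ((\<Sum>s\<in>U. if s \<in> D then w s else 0) - (\<Sum>s\<in>U. if s \<in> C then v s else 0))"
          by (simp only: sum_subtractf sum_distrib_left[symmetric] right_diff_distrib)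
        also have "\<dots> = (\<Sum>s\<in>U. u s * \<gamma> (x - s)) - t * \<gamma> e * (sum w D - sum v C)"
          using sum_if_restrict[OF fU, of D w] sum_if_restrict[OF fU, of C v] by (simp add: U_def)
        also have "\<dots> < (\<Sum>s\<in>U. u s * \<gamma> (x - s))" using Cv t ge0 by simp
        finally have "(\<Sum>s\<in>U. u s * \<gamma> (x - t *\<^sub>R e - s)) < (\<Sum>s\<in>U. u s * \<gamma> (x - s))" .
        moreover have "(\<Sum>s\<in>U. u s * \<gamma> (x - s)) \<le> (\<Sum>s\<in>U. u s * \<gamma> ((x - t *\<^sub>R e) - s))"
          using xfw unfolding fermat_weber_points_def u_def U_def by blast
        ultimately show False by simp
      qed
    qed
  qed
qed


lemma polytope_gauge_max:
  fixes B :: "(real^2) set"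
  assumes nb: "norm_ball B" and pt: "polytope B"
  shows "\<exists>L. finite L \<and> L \<noteq> {} \<and> (\<forall>y. gauge_of B y = Max ((\<lambda>a. a \<bullet> y) ` L))"
proof -
  have "polyhedron B" using pt polytope_imp_polyhedron by blast
  then obtain F where F: "finite F" "B = \<Inter> F" "\<forall>h\<in>F. \<exists>a b. a \<noteq> 0 \<and> h = {x. a \<bullet> x \<le> b}"
    unfolding polyhedron_def by blast
  then obtain av bv where ab: "\<forall>h\<in>F. av h \<noteq> 0 \<and> h = {x. av h \<bullet> x \<le> bv h}"
    by metis
  obtain \<rho> where r: "\<rho> > 0" "cball 0 \<rho> \<subseteq> B" using nb_ball[OF nb] by blast
  have bpos: "bv h > 0" if h: "h \<in> F" for h
  proof -
    define x where "x = (\<rho> / norm (av h)) *\<^sub>R av h"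
    have an: "av h \<noteq> 0" using ab h by blast
    have "norm x = \<rho>" using an r by (simp add: x_def)
    then have "x \<in> B" using r by auto
    then have "x \<in> h" using F h by blast
    then have "av h \<bullet> x \<le> bv h" using ab h by blast
    moreover have "av h \<bullet> x = \<rho> * norm (av h)" using an
      by (simp add: x_def inner_scaleR_right power2_norm_eq_inner[symmetric] power2_eq_square)
    moreover have "\<rho> * norm (av h) > 0" using an r by simp
    ultimately show ?thesis by linarith
  qed
  define L where "L = insert 0 ((\<lambda>h. (1 / bv h) *\<^sub>R av h) ` F)"
  have fL: "finite L" "L \<noteq> {}" using F by (auto simp: L_def)
  have eq: "gauge_of B y = Max ((\<lambda>a. a \<bullet> y) ` L)" for y
  proof (rule le_same_pos_bounds)
    show "gauge_of B y \<ge> 0" by (rule gauge_nonneg[OF nb])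
    show "Max ((\<lambda>a. a \<bullet> y) ` L) \<ge> 0" using fL by (simp add: L_def Max_ge_iff)
    fix t :: real assume t: "t > 0"
    have "gauge_of B y \<le> t \<longleftrightarrow> (1/t) *\<^sub>R y \<in> B" by (rule gauge_le_iff[OF nb t])
    also have "\<dots> \<longleftrightarrow> (\<forall>h\<in>F. av h \<bullet> ((1/t) *\<^sub>R y) \<le> bv h)"
      using F(2) ab by blast
    also have "\<dots> \<longleftrightarrow> (\<forall>h\<in>F. ((1 / bv h) *\<^sub>R av h) \<bullet> y \<le> t)"
    proof -
      have "av h \<bullet> ((1/t) *\<^sub>R y) \<le> bv h \<longleftrightarrow> ((1 / bv h) *\<^sub>R av h) \<bullet> y \<le> t" if "h \<in> F" for h
        using bpos[OF that] t by (simp add: divide_le_eq le_divide_eq mult.commute)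
      then show ?thesis by blast
    qed
    also have "\<dots> \<longleftrightarrow> (\<forall>a\<in>L. a \<bullet> y \<le> t)" using t by (auto simp: L_def)
    also have "\<dots> \<longleftrightarrow> Max ((\<lambda>a. a \<bullet> y) ` L) \<le> t" using fL by (simp add: Max_le_iff)
    finally show "gauge_of B y \<le> t \<longleftrightarrow> Max ((\<lambda>a. a \<bullet> y) ` L) \<le> t" .
  qed
  show ?thesis using fL eq by blast
qed

lemma dirA:
  fixes B :: "(real^2) set"
  assumes nb: "norm_ball B" and pt: "polytope B"
  shows "uniformly_robust (gauge_of B)"
proof -
  obtain L where L: "finite L" "L \<noteq> {}" "\<And>y. gauge_of B y = Max ((\<lambda>a. a \<bullet> y) ` L)"
    using polytope_gauge_max[OF nb pt] by blast
  show ?thesis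
    by (rule robust_max[OF L(1,2) L(3)]) (use gauge_pos[OF nb] gauge_neg[OF nb] gauge_scale[OF nb]
      gauge_triangle[OF nb] gauge_cont[OF nb] in auto)
qed

definition det2 :: "real^2 \<Rightarrow> real^2 \<Rightarrow> real" where
  "det2 u v = u$1 * v$2 - u$2 * v$1"

definition rot :: "real^2 \<Rightarrow> real^2" where
  "rot z = vector [- (z$2), z$1]"

lemma inner2: "(x::real^2) \<bullet> y = x$1 * y$1 + x$2 * y$2"
  by (simp add: inner_vec_def sum_2)

lemma det2_self [simp]: "det2 u u = 0" by (simp add: det2_def)

lemma det2_antisym: "det2 u v = - det2 v u" by (simp add: det2_def)

lemma cramer:
  assumes "det2 u v \<noteq> 0"
  shows "y = (det2 y v / det2 u v) *\<^sub>R u + (det2 u y / det2 u v) *\<^sub>R v"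
proof -
  have h: "det2 u v *\<^sub>R y = det2 y v *\<^sub>R u + det2 u y *\<^sub>R v"
    by (simp add: vec_eq_iff forall_2 det2_def algebra_simps)
  have "y = (1 / det2 u v) *\<^sub>R (det2 u v *\<^sub>R y)" using assms by simp
  also have "\<dots> = (det2 y v / det2 u v) *\<^sub>R u + (det2 u y / det2 u v) *\<^sub>R v"
    unfolding h by (simp add: scaleR_add_right)
  finally show ?thesis .
qed

lemma rot_inner: "rot z \<bullet> y = det2 z y"
  by (simp add: inner2 rot_def det2_def)

lemma det2_rot: "det2 (rot z) y = - (z \<bullet> y)"
  by (simp add: inner2 rot_def det2_def)

lemma rot_nz: "z \<noteq> 0 \<Longrightarrow> rot z \<noteq> 0"
  by (auto simp: rot_def vec_eq_iff forall_2)

lemma det_slope: "det2 y y' * (z \<bullet> z) = (z \<bullet> y) * (rot z \<bullet> y') - (rot z \<bullet> y) * (z \<bullet> y')"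
  by (simp add: inner2 rot_def det2_def algebra_simps)

lemma det_parallel: "(z \<bullet> y) *\<^sub>R y' - (z \<bullet> y') *\<^sub>R y = det2 y y' *\<^sub>R rot z"
  by (simp add: vec_eq_iff forall_2 inner2 rot_def det2_def algebra_simps)

lemma det2_bound: "\<bar>det2 u v\<bar> \<le> 2 * norm u * norm v"
proof -
  have a: "\<bar>u$i * v$j\<bar> \<le> norm u * norm v" for i j
    by (simp add: abs_mult mult_mono component_le_norm_cart)
  have "\<bar>det2 u v\<bar> \<le> \<bar>u$1 * v$2\<bar> + \<bar>u$2 * v$1\<bar>" by (simp add: det2_def)
  also have "\<dots> \<le> 2 * norm u * norm v" using a[of 1 2] a[of 2 1] by simp
  finally show ?thesis .
qed

lemma det2_split: "det2 y y' = det2 (y - z) y' + det2 z (y' - z)"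
  by (simp add: det2_def algebra_simps)

lemma four_sorted:
  fixes T :: "real set"
  assumes "infinite T"
  shows "\<exists>a b c d. a \<in> T \<and> b \<in> T \<and> c \<in> T \<and> d \<in> T \<and> a < b \<and> b < c \<and> c < d"
proof -
  obtain F where F: "F \<subseteq> T" "finite F" "card F = 4"
    using infinite_arbitrarily_large[OF assms] by blast
  obtain l where l: "sorted_wrt (<) l" "set l = F" "length l = card F"
    using finite_set_strict_sorted[OF F(2)] by blast
  have lt: "l ! i < l ! j" if "i < j" "j < 4" for i j
    using sorted_wrt_nth_less[OF l(1) that(1)] that l(3) F(3) by simp
  have mem: "l ! i \<in> T" if "i < 4" for i
    using that l F nth_mem by (metis subsetD)
  show ?thesis
    by (rule exI[of _ "l!0"], rule exI[of _ "l!1"], rule exI[of _ "l!2"], rule exI[of _ "l!3"])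
      (simp add: lt mem)
qed

context
  fixes B :: "(real^2) set"
  assumes nb: "norm_ball B"
begin

lemma support_at_extreme:
  assumes e: "e extreme_point_of B"
  shows "\<exists>g. g \<bullet> e = 1 \<and> (\<forall>y. g \<bullet> y \<le> gauge_of B y)"
proof -
  have eB: "e \<in> B" using e by (simp add: extreme_point_of_def)
  have "B \<noteq> {e}"
  proof
    assume "B = {e}"
    then have "interior B = {}" by simp
    then show False using nb_0[OF nb] by simp
  qed
  then have nr: "e \<notin> rel_interior B" using extreme_point_not_in_REL_INTERIOR e by blast
  have cl: "e \<in> closure B" using eB closure_subset by blast
  obtain a where a: "a \<noteq> 0" "\<And>y. y \<in> closure B \<Longrightarrow> a \<bullet> e \<le> a \<bullet> y"
      "\<And>y. y \<in> rel_interior B \<Longrightarrow> a \<bullet> e < a \<bullet> y"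
    using supporting_hyperplane_relative_frontier[OF nb_convex[OF nb] cl nr] by blast
  have "0 \<in> rel_interior B" using nb_0[OF nb] interior_subset_rel_interior by blast
  then have ae: "a \<bullet> e < 0" using a(3) by fastforce
  define g where "g = (1 / (a \<bullet> e)) *\<^sub>R a"
  have ge: "g \<bullet> e = 1" using ae by (simp add: g_def)
  have gB: "g \<bullet> y \<le> 1" if "y \<in> B" for y
  proof -
    have "a \<bullet> e \<le> a \<bullet> y" using a(2) that closure_subset by blast
    then show ?thesis using ae by (simp add: g_def divide_le_eq)
  qed
  have "g \<bullet> y \<le> gauge_of B y" for y
  proof (cases "y = 0")
    case True then show ?thesis by (simp add: gauge_0[OF nb])
  next
    case False
    then have t: "gauge_of B y > 0" using gauge_pos[OF nb] by blast
    then have "(1 / gauge_of B y) *\<^sub>R y \<in> B" using gauge_le_iff[OF nb t, of y] by simp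
    then have "g \<bullet> ((1 / gauge_of B y) *\<^sub>R y) \<le> 1" by (rule gB)
    then show ?thesis using t by (simp add: divide_le_eq)
  qed
  then show ?thesis using ge by blast
qed

lemma extreme_gauge:
  assumes e: "e extreme_point_of B" shows "gauge_of B e = 1"
proof -
  have "e \<in> B" using e by (simp add: extreme_point_of_def)
  then have "gauge_of B e \<le> 1" using gauge_B[OF nb] by blast
  moreover obtain g where "g \<bullet> e = 1" "\<forall>y. g \<bullet> y \<le> gauge_of B y"
    using support_at_extreme[OF e] by blast
  then have "1 \<le> gauge_of B e" by metis
  ultimately show ?thesis by linarith
qed

lemma extreme_comb:
  assumes y: "y extreme_point_of B" and uB: "u \<in> B" and vB: "v \<in> B"
    and g: "\<forall>z. g \<bullet> z \<le> gauge_of B z" "g \<bullet> u = 1" "g \<bullet> v = 1"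
    and c: "c \<ge> 0" "d \<ge> 0" and yy: "y = c *\<^sub>R u + d *\<^sub>R v"
  shows "y = u \<or> y = v"
proof -
  have gy: "gauge_of B y = 1" by (rule extreme_gauge[OF y])
  have "g \<bullet> y = c + d" using g by (simp add: yy inner_add_right)
  then have cd1: "c + d \<le> 1" using g(1) gy by metis
  have gu: "gauge_of B u \<le> 1" "gauge_of B v \<le> 1" using uB vB gauge_B[OF nb] by auto
  have "gauge_of B y \<le> gauge_of B (c *\<^sub>R u) + gauge_of B (d *\<^sub>R v)"
    unfolding yy by (rule gauge_triangle[OF nb])
  also have "\<dots> = c * gauge_of B u + d * gauge_of B v" using c gauge_scale[OF nb] by simp
  also have "\<dots> \<le> c + d" using gu c by (simp add: add_mono mult_left_le)
  finally have "c + d = 1" using cd1 gy by simp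
  then have yseg: "y = (1 - d) *\<^sub>R u + d *\<^sub>R v" using yy by simp
  have "y \<in> closed_segment u v" unfolding closed_segment_def
    using yseg c \<open>c + d = 1\<close> by auto
  moreover have "y \<notin> open_segment u v" using y uB vB by (simp add: extreme_point_of_def)
  ultimately show ?thesis by (simp add: open_segment_def)
qed

lemma no_common:
  assumes ex: "e1 extreme_point_of B" "e2 extreme_point_of B" "e3 extreme_point_of B" "e4 extreme_point_of B"
    and ne: "e2 \<noteq> e3" "e2 \<noteq> e1" "e2 \<noteq> e4" "e3 \<noteq> e1" "e3 \<noteq> e4"
    and d14: "det2 e1 e4 \<noteq> 0"
    and c2: "a2 > 0" "b2 > 0" "e2 = a2 *\<^sub>R e1 + b2 *\<^sub>R e4"
    and c3: "a3 > 0" "b3 > 0" "e3 = a3 *\<^sub>R e1 + b3 *\<^sub>R e4"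
    and g1: "\<forall>z. g1 \<bullet> z \<le> gauge_of B z" "g1 \<bullet> e1 = 1"
    and g4: "\<forall>z. g4 \<bullet> z \<le> gauge_of B z" "g4 \<bullet> e4 = 1"
    and e: "gauge_of B e = 1" "g1 \<bullet> e = 1" "g4 \<bullet> e = 1"
  shows False
proof -
  let ?g = "gauge_of B"
  have eB: "e \<in> B" using e gauge_B[OF nb, of e] by simp
  have e1B: "e1 \<in> B" and e4B: "e4 \<in> B" using ex by (auto simp: extreme_point_of_def)
  have ge1: "?g e1 = 1" and ge4: "?g e4 = 1" using extreme_gauge ex by auto
  define \<alpha> where "\<alpha> = det2 e e4 / det2 e1 e4"
  define \<beta> where "\<beta> = det2 e1 e / det2 e1 e4"
  have eab: "e = \<alpha> *\<^sub>R e1 + \<beta> *\<^sub>R e4" unfolding \<alpha>_def \<beta>_def by (rule cramer[OF d14])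
  have e0: "e \<noteq> 0" using e(1) gauge_0[OF nb] by auto
  have e1ne4: "e1 \<noteq> e4" using d14 by auto
  have g1e4: "g1 \<bullet> e4 \<ge> -1"
  proof -
    have "g1 \<bullet> (- e4) \<le> ?g (- e4)" using g1 by blast
    then show ?thesis using gauge_neg[OF nb, of e4] ge4 by simp
  qed
  have g4e1: "g4 \<bullet> e1 \<ge> -1"
  proof -
    have "g4 \<bullet> (- e1) \<le> ?g (- e1)" using g4 by blast
    then show ?thesis using gauge_neg[OF nb, of e1] ge1 by simp
  qed
  have lin1: "g1 \<bullet> e = \<alpha> + \<beta> * (g1 \<bullet> e4)" using g1 by (simp add: eab inner_add_right)
  have lin4: "g4 \<bullet> e = \<alpha> * (g4 \<bullet> e1) + \<beta>" using g4 by (simp add: eab inner_add_right)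
  consider "\<alpha> > 0" "\<beta> < 0" | "\<alpha> < 0" "\<beta> > 0" | "\<alpha> \<le> 0" "\<beta> \<le> 0" | "\<alpha> \<ge> 0" "\<beta> \<ge> 0"
    by linarith
  then show False
  proof cases
    case 1
    have "e1 = (1/\<alpha>) *\<^sub>R e + (- \<beta> / \<alpha>) *\<^sub>R e4"
      using 1 by (simp add: eab scaleR_add_right divide_inverse)
    then have "e1 = e \<or> e1 = e4"
      using extreme_comb[OF ex(1) eB e4B g4(1) e(3) g4(2), of "1/\<alpha>" "-\<beta>/\<alpha>"] 1 by (simp add: divide_nonpos_pos)
    then show False
    proof
      assume "e1 = e" then have "\<beta> = 0" by (simp add: \<beta>_def)
      then show False using 1 by simp
    qed (use e1ne4 in simp)
  next
    case 2
    have "e4 = (1/\<beta>) *\<^sub>R e + (- \<alpha> / \<beta>) *\<^sub>R e1"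
      using 2 by (simp add: eab scaleR_add_right divide_inverse)
    then have "e4 = e \<or> e4 = e1"
      using extreme_comb[OF ex(4) eB e1B g1(1) e(2) g1(2), of "1/\<beta>" "-\<alpha>/\<beta>"] 2 by (simp add: divide_nonpos_pos)
    then show False
    proof
      assume "e4 = e" then have "\<alpha> = 0" by (simp add: \<alpha>_def)
      then show False using 2 by simp
    qed (use e1ne4 in simp)
  next
    case 3
    have "\<beta> * (g1 \<bullet> e4) \<le> - \<beta>" using mult_left_mono_neg[OF g1e4 3(2)] by simp
    moreover have "\<alpha> * (g4 \<bullet> e1) \<le> - \<alpha>" using mult_left_mono_neg[OF g4e1 3(1)] by simp
    ultimately show False using lin1 lin4 e 3 by linarith
  next
    case 4
    have key: "y = e" if y: "y extreme_point_of B" "y \<noteq> e1" "y \<noteq> e4" "a > 0" "b > 0"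
      "y = a *\<^sub>R e1 + b *\<^sub>R e4" for y a b
    proof (cases "a * \<beta> \<ge> b * \<alpha>")
      case True
      have bp: "\<beta> > 0"
      proof (rule ccontr)
        assume "\<not> \<beta> > 0" then have "\<beta> = 0" using 4 by simp
        moreover then have "\<alpha> \<noteq> 0" using e0 eab by auto
        ultimately show False using True 4 y by (simp add: zero_less_mult_iff) (smt (verit) mult_pos_pos)
      qed
      have yy: "y = (a - b * \<alpha> / \<beta>) *\<^sub>R e1 + (b / \<beta>) *\<^sub>R e"
        using bp y(6) by (simp add: eab scaleR_add_right algebra_simps divide_inverse)
      have c0: "a - b * \<alpha> / \<beta> \<ge> 0" using True bp by (simp add: field_simps)
      have d0: "b / \<beta> \<ge> 0" using bp y by simp
      have "y = e1 \<or> y = e"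
        by (rule extreme_comb[OF y(1) e1B eB g1(1) g1(2) e(2) c0 d0 yy])
      then show ?thesis using y by auto
    next
      case False
      then have ap: "\<alpha> > 0" using 4 y by (cases "\<alpha> = 0") (auto simp: zero_less_mult_iff)
      have yy: "y = (b - a * \<beta> / \<alpha>) *\<^sub>R e4 + (a / \<alpha>) *\<^sub>R e"
        using ap y(6) by (simp add: eab scaleR_add_right algebra_simps divide_inverse)
      have c0: "b - a * \<beta> / \<alpha> \<ge> 0" using False ap by (simp add: field_simps)
      have d0: "a / \<alpha> \<ge> 0" using ap y by simp
      have "y = e4 \<or> y = e"
        by (rule extreme_comb[OF y(1) e4B eB g4(1) g4(2) e(3) c0 d0 yy])
      then show ?thesis using y by auto
    qed
    have "e2 = e" using key[OF ex(2) ne(2) ne(3) c2] .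
    moreover have "e3 = e" using key[OF ex(3) ne(4) ne(5) c3] .
    ultimately show False using ne(1) by simp
  qed
qed


lemma FW_sum3:
  assumes "p \<noteq> 0" "x \<noteq> 0" "x \<noteq> p"
  shows "(\<Sum>s\<in>{0,p} \<union> {x}. wsum_weight {0,p} (\<lambda>_. 1) {x} (\<lambda>_. l) s * gauge_of B (z - s))
     = gauge_of B z + gauge_of B (z - p) + l * gauge_of B (z - x)"
proof -
  have "{0,p} \<union> {x} = insert 0 (insert p {x})" by auto
  then show ?thesis using assms by (simp add: wsum_weight_def)
qed

lemma common_face:
  assumes p: "p \<noteq> 0" and x: "x \<noteq> 0" "x \<noteq> p"
    and nfw: "\<And>l. 0 < l \<Longrightarrow> l < 2 \<Longrightarrow>
      x \<notin> fermat_weber_points (gauge_of B) ({0,p} \<union> {x}) (wsum_weight {0,p} (\<lambda>_. 1) {x} (\<lambda>_. l))"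
    and g1: "\<forall>z. g1 \<bullet> z \<le> gauge_of B z" "g1 \<bullet> x = gauge_of B x"
    and g4: "\<forall>z. g4 \<bullet> z \<le> gauge_of B z" "g4 \<bullet> (x - p) = gauge_of B (x - p)"
  shows "\<exists>e. gauge_of B e = 1 \<and> g1 \<bullet> e = 1 \<and> g4 \<bullet> e = 1"
proof (rule ccontr)
  let ?g = "gauge_of B"
  assume none: "\<not> ?thesis"
  define S where "S = {d. ?g d = 1}"
  have cS: "compact S" unfolding S_def by (rule gauge_sphere_compact[OF nb])
  have gx: "?g x > 0" using gauge_pos[OF nb x(1)] .
  have "(1 / ?g x) *\<^sub>R x \<in> S" using gx gauge_scale[OF nb, of "1 / ?g x" x] by (simp add: S_def)
  then have Sne: "S \<noteq> {}" by blast
  have cpsi: "continuous_on S (\<lambda>d. min (g1 \<bullet> d) (g4 \<bullet> d))"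
    by (intro continuous_intros)
  obtain d0 where d0: "d0 \<in> S" "\<forall>d\<in>S. min (g1 \<bullet> d) (g4 \<bullet> d) \<le> min (g1 \<bullet> d0) (g4 \<bullet> d0)"
    using continuous_attains_sup[OF cS Sne cpsi] by blast
  define M where "M = min (g1 \<bullet> d0) (g4 \<bullet> d0)"
  have "?g d0 = 1" using d0 by (simp add: S_def)
  then have "g1 \<bullet> d0 \<le> 1" "g4 \<bullet> d0 \<le> 1" using g1(1)[rule_format, of d0] g4(1)[rule_format, of d0] by auto
  moreover have "\<not> (g1 \<bullet> d0 = 1 \<and> g4 \<bullet> d0 = 1)" using none d0 by (auto simp: S_def)
  ultimately have M1: "M < 1" unfolding M_def by linarith
  define l where "l = 1 + max M 0"
  have l: "0 < l" "l < 2" "l - 1 \<ge> M" using M1 by (auto simp: l_def)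
  have "x \<notin> fermat_weber_points ?g ({0,p} \<union> {x}) (wsum_weight {0,p} (\<lambda>_. 1) {x} (\<lambda>_. l))"
    using nfw l by blast
  then obtain y where y: "?g y + ?g (y - p) + l * ?g (y - x) < ?g x + ?g (x - p) + l * ?g (x - x)"
    unfolding fermat_weber_points_def FW_sum3[OF p x] by (auto simp: not_le)
  then have yl: "?g y + ?g (y - p) + l * ?g (x - y) < ?g x + ?g (x - p)"
    using gauge_0[OF nb] gauge_neg[OF nb, of "x - y"] by simp
  have yx: "y \<noteq> x" using y by auto
  define c where "c = ?g (x - y)"
  have c: "c > 0" unfolding c_def using gauge_pos[OF nb] yx by simp
  have A1: "?g x - ?g y \<le> c" unfolding c_def by (rule gauge_diff[OF nb])
  have A2: "?g (x - p) - ?g (y - p) \<le> c" unfolding c_def using gauge_diff[OF nb, of "x - p" "y - p"] by simp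
  have B1: "g1 \<bullet> (x - y) \<ge> ?g x - ?g y" using g1 by (simp add: inner_diff_right)
  have B2: "g4 \<bullet> (x - y) \<ge> ?g (x - p) - ?g (y - p)"
  proof -
    have "x - y = (x - p) - (y - p)" by simp
    then have "g4 \<bullet> (x - y) = g4 \<bullet> (x - p) - g4 \<bullet> (y - p)" by (metis inner_diff_right)
    then show ?thesis using g4 by auto
  qed
  have yl': "?g y + ?g (y - p) + l * c < ?g x + ?g (x - p)" using yl by (simp add: c_def)
  have lc: "(l - 1) * c = l * c - c" by (simp add: algebra_simps)
  have h1: "g1 \<bullet> (x - y) > (l - 1) * c" using yl' A1 A2 B1 lc by linarith
  have h2: "g4 \<bullet> (x - y) > (l - 1) * c" using yl' A1 A2 B2 lc by linarith
  define d where "d = (1 / c) *\<^sub>R (x - y)"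
  have dS: "d \<in> S" unfolding d_def S_def using c gauge_scale[OF nb, of "1/c" "x - y"] by (simp add: c_def)
  have "g1 \<bullet> d = (g1 \<bullet> (x - y)) / c" unfolding d_def inner_scaleR_right by simp
  then have "g1 \<bullet> d > l - 1" using h1 c by (simp add: less_divide_eq)
  moreover have "g4 \<bullet> d = (g4 \<bullet> (x - y)) / c" unfolding d_def inner_scaleR_right by simp
  then have "g4 \<bullet> d > l - 1" using h2 c by (simp add: less_divide_eq)
  ultimately have "min (g1 \<bullet> d) (g4 \<bullet> d) > M" using l by simp
  then show False using d0(2) dS M_def by force
qed

end

lemma near_inner:
  fixes y z :: "real^2"
  assumes "norm (y - z) < \<epsilon>" "\<epsilon> \<le> norm z / 4"
  shows "z \<bullet> y > (z \<bullet> z) / 2"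
proof -
  have "0 \<le> norm (y - z)" by simp
  then have N: "norm z > 0" using assms by linarith
  have "\<bar>z \<bullet> (y - z)\<bar> \<le> norm z * norm (y - z)" by (rule Cauchy_Schwarz_ineq2)
  also have "\<dots> < norm z * \<epsilon>" using N assms by simp
  also have "\<dots> \<le> norm z * (norm z / 4)" using N assms by simp
  finally have h: "\<bar>z \<bullet> (y - z)\<bar> < (z \<bullet> z) / 4" by (simp add: power2_norm_eq_inner[symmetric] power2_eq_square)
  have "z \<bullet> y = z \<bullet> z + z \<bullet> (y - z)" by (simp add: inner_diff_right)
  moreover have "z \<bullet> z \<ge> 0" by simp
  ultimately show ?thesis using h by linarith
qed

lemma near_det:
  fixes y y' z :: "real^2"
  assumes "norm (y - z) < \<epsilon>" "norm (y' - z) < \<epsilon>" "\<epsilon> \<le> 1"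
  shows "\<bar>det2 y y'\<bar> \<le> \<epsilon> * (4 * norm z + 2)"
proof -
  have e0: "\<epsilon> \<ge> 0" using assms(1) norm_ge_zero[of "y - z"] by linarith
  have ny': "norm y' \<le> norm z + 1"
    using assms norm_triangle_ineq[of "y' - z" z] by simp
  have "\<bar>det2 (y - z) y'\<bar> \<le> 2 * norm (y - z) * norm y'" by (rule det2_bound)
  also have "\<dots> \<le> 2 * \<epsilon> * (norm z + 1)"
    using assms ny' e0 by (intro mult_mono) auto
  finally have a: "\<bar>det2 (y - z) y'\<bar> \<le> 2 * \<epsilon> * (norm z + 1)" .
  have "\<bar>det2 z (y' - z)\<bar> \<le> 2 * norm z * norm (y' - z)" by (rule det2_bound)
  also have "\<dots> \<le> 2 * norm z * \<epsilon>" using assms by (intro mult_left_mono) auto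
  finally have b: "\<bar>det2 z (y' - z)\<bar> \<le> 2 * norm z * \<epsilon>" .
  have "\<bar>det2 y y'\<bar> \<le> \<bar>det2 (y - z) y'\<bar> + \<bar>det2 z (y' - z)\<bar>"
    using det2_split[of y y' z] by simp
  also have "\<dots> \<le> \<epsilon> * (4 * norm z + 2)" using a b by (simp add: algebra_simps)
  finally show ?thesis .
qed

lemma slope_det:
  fixes y y' z :: "real^2"
  assumes z: "z \<noteq> 0" and c: "z \<bullet> y > 0" "z \<bullet> y' > 0"
    and lt: "(rot z \<bullet> y) / (z \<bullet> y) < (rot z \<bullet> y') / (z \<bullet> y')"
  shows "det2 y y' > 0"
proof -
  have n0: "z \<bullet> z > 0" using z by simp
  have "(rot z \<bullet> y) * (z \<bullet> y') < (rot z \<bullet> y') * (z \<bullet> y)"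
    using lt c by (simp add: divide_less_eq field_simps)
  then have "det2 y y' * (z \<bullet> z) > 0" unfolding det_slope by (simp add: algebra_simps)
  then show ?thesis using n0 by (simp add: zero_less_mult_iff)
qed


lemma dirB:
  fixes B :: "(real^2) set"
  assumes nb: "norm_ball B" and rob: "uniformly_robust (gauge_of B)"
  shows "polytope B"
proof (rule ccontr)
  let ?g = "gauge_of B"
  assume np: "\<not> polytope B"
  define E where "E = {x. x extreme_point_of B}"
  have infE: "infinite E"
  proof
    assume "finite E"
    moreover have "B = convex hull E" unfolding E_def
      by (rule Krein_Milman_Minkowski[OF nb_compact[OF nb] nb_convex[OF nb]])
    ultimately show False using np unfolding polytope_def by blast
  qed
  have EB: "E \<subseteq> B" by (auto simp: E_def extreme_point_of_def)
  have "\<exists>x\<in>B. x islimpt E"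
    using iffD1[OF compact_eq_Bolzano_Weierstrass nb_compact[OF nb], rule_format, of E] infE EB by blast
  then obtain z0 where z0: "z0 \<in> B" "z0 islimpt E" by blast
  have ES: "E \<subseteq> {d. ?g d = 1}" using extreme_gauge[OF nb] by (auto simp: E_def)
  have "closed {d. ?g d = 1}" using gauge_sphere_compact[OF nb] compact_imp_closed by blast
  moreover have "z0 islimpt {d. ?g d = 1}" by (rule islimpt_subset[OF z0(2) ES])
  ultimately have gz0: "?g z0 = 1" by (simp add: closed_limpt)
  then have z0n: "z0 \<noteq> 0" using gauge_0[OF nb] by auto
  define p where "p = rot z0"
  have pn: "p \<noteq> 0" using rot_nz[OF z0n] by (simp add: p_def)
  define D where "D = {0, p}"
  define w :: "real^2 \<Rightarrow> real" where "w = (\<lambda>_. 1)"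
  have Dw: "finite D \<and> (\<forall>s\<in>D. w s > 0)" by (simp add: D_def w_def)
  obtain K where K: "bounded K" "\<forall>C v. finite C \<and> (\<forall>s\<in>C. 0 < v s) \<and> 1 * sum v C < sum w D \<longrightarrow>
              fermat_weber_points ?g (D \<union> C) (wsum_weight D w C v) \<subseteq> K"
    using rob[unfolded uniformly_robust_def, rule_format, OF Dw] by blast
  have swD: "sum w D = 2" using pn by (simp add: D_def w_def)
  obtain b where b: "b > 0" "\<And>x. x \<in> K \<Longrightarrow> norm x \<le> b" using K(1) bounded_pos by blast
  obtain M where M: "M > 0" "\<And>y. ?g y \<le> M * norm y" using gauge_upper[OF nb] by blast
  define r where "r = M * b"
  have r0: "r \<ge> 0" using M b by (simp add: r_def)
  have notK: "x \<notin> K" if "?g x > r" for x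
  proof
    assume "x \<in> K"
    then have "norm x \<le> b" using b by blast
    then have "M * norm x \<le> r" using M by (simp add: r_def)
    then show False using M(2)[of x] that by linarith
  qed
  define N where "N = norm z0"
  define n0 where "n0 = z0 \<bullet> z0"
  have N: "N > 0" using z0n by (simp add: N_def)
  have n0: "n0 > 0" using z0n by (simp add: n0_def)
  define \<epsilon> where "\<epsilon> = min 1 (min (N / 4) (n0 / (4 * (r + 1) * (4 * N + 2))))"
  have "0 < n0 / (4 * (r + 1) * (4 * N + 2))" using N n0 r0 by (intro divide_pos_pos mult_pos_pos) auto
  then have \<epsilon>0: "\<epsilon> > 0" using N unfolding \<epsilon>_def by simp
  have \<epsilon>1: "\<epsilon> \<le> 1" unfolding \<epsilon>_def by (rule min.cobounded1)
  have \<epsilon>2: "\<epsilon> \<le> N / 4" unfolding \<epsilon>_def by (rule min.coboundedI2, rule min.cobounded1)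
  have \<epsilon>3: "\<epsilon> \<le> n0 / (4 * (r + 1) * (4 * N + 2))" unfolding \<epsilon>_def by (rule min.coboundedI2, rule min.cobounded2)
  note \<epsilon> = \<epsilon>0 \<epsilon>1 \<epsilon>2 \<epsilon>3
  have P: "4 * N + 2 > 0" using N by simp
  have "\<epsilon> * (4 * N + 2) \<le> n0 / (4 * (r + 1) * (4 * N + 2)) * (4 * N + 2)"
    by (rule mult_right_mono[OF \<epsilon>(4)]) (use P in simp)
  also have "\<dots> = n0 / (4 * (r + 1))" using P by simp
  finally have epsdet: "\<epsilon> * (4 * N + 2) \<le> n0 / (4 * (r + 1))" .
  define Eb where "Eb = E \<inter> ball z0 \<epsilon>"
  have infEb: "infinite Eb" using z0(2) \<epsilon>(1) unfolding Eb_def islimpt_eq_infinite_ball by blast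
  have near: "norm (y - z0) < \<epsilon>" if "y \<in> Eb" for y
    using that by (simp add: Eb_def dist_norm norm_minus_commute)
  have cpos: "z0 \<bullet> y > n0 / 2" if "y \<in> Eb" for y
    using near_inner[OF near[OF that] \<epsilon>(3)[unfolded N_def]] by (simp add: n0_def)
  have dsmall: "\<bar>det2 y y'\<bar> \<le> n0 / (4 * (r + 1))" if "y \<in> Eb" "y' \<in> Eb" for y y'
    using near_det[OF near[OF that(1)] near[OF that(2)] \<epsilon>(2)] epsdet by (simp add: N_def)
  have gEb: "?g y = 1" if "y \<in> Eb" for y using that ES by (auto simp: Eb_def)
  define \<sigma> where "\<sigma> y = (p \<bullet> y) / (z0 \<bullet> y)" for y
  have detpos: "det2 y y' > 0" if "y \<in> Eb" "y' \<in> Eb" "\<sigma> y < \<sigma> y'" for y y'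
    using slope_det[OF z0n, of y y'] cpos[OF that(1)] cpos[OF that(2)] n0 that(3)
    by (simp add: \<sigma>_def p_def)
  have injs: "inj_on \<sigma> Eb"
  proof (rule inj_onI)
    fix y y' assume y: "y \<in> Eb" "y' \<in> Eb" "\<sigma> y = \<sigma> y'"
    have "n0 / 2 > 0" using n0 by simp
    then have c: "z0 \<bullet> y > 0" "z0 \<bullet> y' > 0" using cpos[OF y(1)] cpos[OF y(2)] by linarith+
    have "p \<bullet> y = \<sigma> y * (z0 \<bullet> y)" "p \<bullet> y' = \<sigma> y' * (z0 \<bullet> y')" using c by (auto simp: \<sigma>_def)
    then have "det2 y y' * n0 = 0" using det_slope[of y y' z0] y(3) by (simp add: p_def n0_def)
    then have "det2 y y' = 0" using n0 by simp
    then have "(z0 \<bullet> y) *\<^sub>R y' = (z0 \<bullet> y') *\<^sub>R y" using det_parallel[of z0 y y'] by simp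
    then have "(1 / (z0 \<bullet> y)) *\<^sub>R ((z0 \<bullet> y) *\<^sub>R y') = (1 / (z0 \<bullet> y)) *\<^sub>R ((z0 \<bullet> y') *\<^sub>R y)"
      by simp
    then have yy: "y' = ((z0 \<bullet> y') / (z0 \<bullet> y)) *\<^sub>R y" using c by simp
    have qnn: "(z0 \<bullet> y') / (z0 \<bullet> y) \<ge> 0" using c by simp
    have "?g y' = ((z0 \<bullet> y') / (z0 \<bullet> y)) * ?g y" 
      using gauge_scale[OF nb qnn, of y] yy by simp
    then have "(z0 \<bullet> y') / (z0 \<bullet> y) = 1" using gEb y by simp
    then show "y = y'" using yy by simp
  qed
  have "infinite (\<sigma> ` Eb)" using infEb injs finite_imageD by blast
  from four_sorted[OF this] obtain s1 s2 s3 s4 where s: "s1 \<in> \<sigma> ` Eb" "s2 \<in> \<sigma> ` Eb" "s3 \<in> \<sigma> ` Eb" "s4 \<in> \<sigma> ` Eb"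
    "s1 < s2" "s2 < s3" "s3 < s4"
    by blast
  obtain y1 where y1: "y1 \<in> Eb" "\<sigma> y1 = s1" using s(1) by (rule imageE) simp
  obtain y2 where y2: "y2 \<in> Eb" "\<sigma> y2 = s2" using s(2) by (rule imageE) simp
  obtain y3 where y3: "y3 \<in> Eb" "\<sigma> y3 = s3" using s(3) by (rule imageE) simp
  obtain y4 where y4: "y4 \<in> Eb" "\<sigma> y4 = s4" using s(4) by (rule imageE) simp
  note y = y1(1) y2(1) y3(1) y4(1) y1(2) y2(2) y3(2) y4(2)
  have ext: "y extreme_point_of B" if "y \<in> Eb" for y using that by (simp add: Eb_def E_def)
  define d14 where "d14 = det2 y4 y1"
  have d14: "d14 < 0" using detpos[OF y(1) y(4)] y s det2_antisym[of y4 y1] by (simp add: d14_def)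
  have dne: "det2 y4 y1 \<noteq> 0" using d14 by (simp add: d14_def)
  have coef: "det2 y y1 / d14 > 0 \<and> det2 y4 y / d14 > 0"
    if "y \<in> Eb" "s1 < \<sigma> y" "\<sigma> y < s4" for y
  proof
    have "det2 y1 y > 0" using detpos[OF y(1) that(1)] y that by simp
    then show "det2 y y1 / d14 > 0" using d14 det2_antisym[of y y1] by (simp add: divide_neg_neg divide_pos_neg divide_less_0_iff zero_less_divide_iff)
    have "det2 y y4 > 0" using detpos[OF that(1) y(4)] y that by simp
    then show "det2 y4 y / d14 > 0" using d14 det2_antisym[of y4 y] by (simp add: divide_neg_neg divide_pos_neg divide_less_0_iff zero_less_divide_iff)
  qed
  have c2: "det2 y3 y1 / d14 > 0" "det2 y4 y3 / d14 > 0" using coef[OF y(3)] y s by auto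
  have c3: "det2 y2 y1 / d14 > 0" "det2 y4 y2 / d14 > 0" using coef[OF y(2)] y s by auto
  have cr2: "y3 = (det2 y3 y1 / d14) *\<^sub>R y4 + (det2 y4 y3 / d14) *\<^sub>R y1"
    unfolding d14_def by (rule cramer[OF dne])
  have cr3: "y2 = (det2 y2 y1 / d14) *\<^sub>R y4 + (det2 y4 y2 / d14) *\<^sub>R y1"
    unfolding d14_def by (rule cramer[OF dne])
  have crp: "p = (det2 p y1 / d14) *\<^sub>R y4 + (det2 y4 p / d14) *\<^sub>R y1"
    unfolding d14_def by (rule cramer[OF dne])
  define a where "a = - (z0 \<bullet> y1) / d14"
  define bb where "bb = - (z0 \<bullet> y4) / d14"
  have dp1: "det2 p y1 = - (z0 \<bullet> y1)" by (simp add: p_def det2_rot)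
  have dp4: "det2 y4 p = z0 \<bullet> y4" using det2_antisym[of y4 p] by (simp add: p_def det2_rot)
  have "n0 / 2 > 0" using n0 by simp
  then have c1: "z0 \<bullet> y1 > 0" "z0 \<bullet> y4 > 0" using cpos[OF y(1)] cpos[OF y(4)] by linarith+
  have a: "a > 0" using c1 d14 by (simp add: a_def divide_less_0_iff zero_less_divide_iff)
  have bb: "bb > 0" using c1 d14 by (simp add: bb_def divide_less_0_iff zero_less_divide_iff)
  have pab: "p = a *\<^sub>R y4 - bb *\<^sub>R y1" using crp dp1 dp4 by (simp add: a_def bb_def)
  define x where "x = a *\<^sub>R y4"
  have xp: "x - p = bb *\<^sub>R y1" using pab by (simp add: x_def)
  have gy4: "?g y4 = 1" and gy1: "?g y1 = 1" using gEb y by auto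
  have gx: "?g x = a" using gauge_scale[OF nb, of a y4] a gy4 by (simp add: x_def)
  have gxp: "?g (x - p) = bb" using gauge_scale[OF nb, of bb y1] bb gy1 by (simp add: xp)
  have ar: "a > r"
  proof (rule ccontr)
    assume "\<not> a > r"
    have ad: "a * \<bar>d14\<bar> = z0 \<bullet> y1" using d14 by (simp add: a_def)
    have "\<bar>d14\<bar> \<le> n0 / (4 * (r + 1))" using dsmall[OF y(4) y(1)] by (simp add: d14_def)
    then have h: "(r + 1) * \<bar>d14\<bar> \<le> n0 / 4" using r0 by (simp add: le_divide_eq field_simps)
    have "a * \<bar>d14\<bar> \<le> (r + 1) * \<bar>d14\<bar>" using \<open>\<not> a > r\<close> by (intro mult_right_mono) auto
    then have "z0 \<bullet> y1 \<le> n0 / 4" using ad h by linarith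
    then show False using cpos[OF y(1)] n0 by linarith
  qed
  have xK: "x \<notin> K" using notK ar gx by simp
  have y4n: "y4 \<noteq> 0" using gy4 gauge_0[OF nb] by auto
  have y1n: "y1 \<noteq> 0" using gy1 gauge_0[OF nb] by auto
  have x0: "x \<noteq> 0" using a y4n by (simp add: x_def)
  have xpn: "x \<noteq> p" using xp bb y1n by auto
  have nfw: "x \<notin> fermat_weber_points ?g ({0,p} \<union> {x}) (wsum_weight {0,p} (\<lambda>_. 1) {x} (\<lambda>_. l))"
    if l: "0 < l" "l < 2" for l
  proof
    assume xin: "x \<in> fermat_weber_points ?g ({0,p} \<union> {x}) (wsum_weight {0,p} (\<lambda>_. 1) {x} (\<lambda>_. l))"
    have "finite {x} \<and> (\<forall>s\<in>{x}. 0 < (\<lambda>_. l) s) \<and> 1 * sum (\<lambda>_. l) {x} < sum w D"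
      using l swD by simp
    then have "fermat_weber_points ?g (D \<union> {x}) (wsum_weight D w {x} (\<lambda>_. l)) \<subseteq> K" by (rule K(2)[rule_format])
    then have "fermat_weber_points ?g ({0,p} \<union> {x}) (wsum_weight {0,p} (\<lambda>_. 1) {x} (\<lambda>_. l)) \<subseteq> K"
      unfolding D_def w_def .
    then show False using xin xK by blast
  qed
  obtain g1 where g1: "g1 \<bullet> y4 = 1" "\<forall>z. g1 \<bullet> z \<le> ?g z"
    using support_at_extreme[OF nb ext[OF y(4)]] by blast
  obtain g4 where g4: "g4 \<bullet> y1 = 1" "\<forall>z. g4 \<bullet> z \<le> ?g z"
    using support_at_extreme[OF nb ext[OF y(1)]] by blast
  have g1x: "g1 \<bullet> x = ?g x" using g1 gx by (simp add: x_def)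
  have g4x: "g4 \<bullet> (x - p) = ?g (x - p)" using g4 gxp by (simp add: xp)
  obtain e where e: "?g e = 1" "g1 \<bullet> e = 1" "g4 \<bullet> e = 1"
    using common_face[OF nb pn x0 xpn nfw g1(2) g1x g4(2) g4x] by blast
  have sne: "y3 \<noteq> y2" "y3 \<noteq> y4" "y3 \<noteq> y1" "y2 \<noteq> y4" "y2 \<noteq> y1"
    using y(5-8) s(5-7) by (metis less_irrefl order.strict_trans)+
  show False
    by (rule no_common[OF nb ext[OF y(4)] ext[OF y(3)] ext[OF y(2)] ext[OF y(1)] sne dne
        c2 cr2 c3 cr3 g1(2) g1(1) g4(2) g4(1) e])
qed

theorem mainTheorem17:
  fixes B :: "(real^2) set"
  assumes "norm_ball B"
  shows "uniformly_robust (gauge_of B) \<longleftrightarrow> polytope B"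
  using dirA[OF assms] dirB[OF assms] by blast

end
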